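(* Let $X$ be a metric space, let $A\subseteq X$ be nonempty and let $Y$ be a complete $\mathbb{R}$-tree. Then the multivalued mapping $\Phi:\mathcal{N}(A,Y)\to\mathcal{P}(\mathcal{N}(X,Y))$, assigning to each $f\in\mathcal{N}(A,Y)$ the set of all $f'\in\mathcal{N}(X,Y)$ with $f'|_A=f$, admits a nonexpansive selection, i.e. there is a map $\alpha:\mathcal{N}(A,Y)\to\mathcal{N}(X,Y)$ with $\alpha(f)\in\Phi(f)$ for all $f$ and $d_\infty(\alpha(f),\alpha(g))\le d_\infty(f,g)$.
   Context: An $\mathbb{R}$-tree is a uniquely geodesic metric space such that whenever two geodesic segments intersect only in a common endpoint, their union is a geodesic segment. $\mathcal{N}(A,Y)$ is the set of bounded nonexpansive maps $A\to Y$ with the supremum metric $d_\infty$. *)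

theory Defs
  imports "HOL-Analysis.Analysis"
begin

definition geodesic_segment :: "'b set \<Rightarrow> ('b \<Rightarrow> 'b \<Rightarrow> real) \<Rightarrow> 'b \<Rightarrow> 'b \<Rightarrow> 'b set \<Rightarrow> bool" where
  "geodesic_segment M d x y S \<longleftrightarrow>
     (\<exists>\<gamma>. \<gamma> \<in> {0..d x y} \<rightarrow> M \<and> \<gamma> 0 = x \<and> \<gamma> (d x y) = y \<and>
          (\<forall>s\<in>{0..d x y}. \<forall>t\<in>{0..d x y}. d (\<gamma> s) (\<gamma> t) = \<bar>s - t\<bar>) \<and>
          S = \<gamma> ` {0..d x y})"

definition uniquely_geodesic :: "'b set \<Rightarrow> ('b \<Rightarrow> 'b \<Rightarrow> real) \<Rightarrow> bool" where
  "uniquely_geodesic M d \<longleftrightarrow> (\<forall>x\<in>M. \<forall>y\<in>M. \<exists>!S. geodesic_segment M d x y S)"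

definition R_tree :: "'b set \<Rightarrow> ('b \<Rightarrow> 'b \<Rightarrow> real) \<Rightarrow> bool" where
  "R_tree M d \<longleftrightarrow> Metric_space M d \<and> uniquely_geodesic M d \<and>
     (\<forall>x y z S T. geodesic_segment M d x y S \<and> geodesic_segment M d y z T \<and> S \<inter> T = {y}
        \<longrightarrow> geodesic_segment M d x z (S \<union> T))"

text \<open>\<N>(A,Y): bounded nonexpansive maps A \<rightarrow> Y, represented as extensional functions
(value undefined outside A).\<close>
definition bnonexp :: "'a set \<Rightarrow> ('a \<Rightarrow> 'a \<Rightarrow> real) \<Rightarrow> 'b set \<Rightarrow> ('b \<Rightarrow> 'b \<Rightarrow> real) \<Rightarrow> ('a \<Rightarrow> 'b) set" where
  "bnonexp A dX MY dY = {f. f \<in> A \<rightarrow>\<^sub>E MY \<and>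
       (\<forall>x\<in>A. \<forall>y\<in>A. dY (f x) (f y) \<le> dX x y) \<and> Metric_space.mbounded MY dY (f ` A)}"

definition dsup :: "'a set \<Rightarrow> ('b \<Rightarrow> 'b \<Rightarrow> real) \<Rightarrow> ('a \<Rightarrow> 'b) \<Rightarrow> ('a \<Rightarrow> 'b) \<Rightarrow> real" where
  "dsup A dY f g = (SUP x\<in>A. dY (f x) (g x))"

end

theory Submission
  imports Defs
begin

locale rtree = Metric_space M d for M d +
  assumes rt: "R_tree M d"
begin

definition isgeo where
  "isgeo \<gamma> x y \<longleftrightarrow> \<gamma> \<in> {0..d x y} \<rightarrow> M \<and> \<gamma> 0 = x \<and> \<gamma> (d x y) = y \<and>
          (\<forall>s\<in>{0..d x y}. \<forall>t\<in>{0..d x y}. d (\<gamma> s) (\<gamma> t) = \<bar>s - t\<bar>)"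

lemma gs_iff: "geodesic_segment M d x y S \<longleftrightarrow> (\<exists>\<gamma>. isgeo \<gamma> x y \<and> S = \<gamma> ` {0..d x y})"
  unfolding geodesic_segment_def isgeo_def by blast

definition seg where "seg x y = {p\<in>M. d x p + d p y = d x y}"

lemma seg_sym: "seg x y = seg y x"
  unfolding seg_def using commute by auto

lemma geo_exists: assumes "x \<in> M" "y \<in> M" shows "\<exists>\<gamma>. isgeo \<gamma> x y"
proof -
  have "uniquely_geodesic M d" using rt by (simp add: R_tree_def)
  then obtain S where "geodesic_segment M d x y S" using assms unfolding uniquely_geodesic_def by blast
  then show ?thesis using gs_iff by blast
qed

lemma isgeo_dist:
  assumes "isgeo \<gamma> x y" "0 \<le> t" "t \<le> d x y"
  shows "d x (\<gamma> t) = t" "d (\<gamma> t) y = d x y - t" "\<gamma> t \<in> M"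
proof -
  have "d (\<gamma> 0) (\<gamma> t) = \<bar>0 - t\<bar>" using assms unfolding isgeo_def by auto
  then show "d x (\<gamma> t) = t" using assms unfolding isgeo_def by auto
  have e: "\<gamma> (d x y) = y" using assms(1) unfolding isgeo_def by auto
  have "\<forall>s\<in>{0..d x y}. \<forall>t\<in>{0..d x y}. d (\<gamma> s) (\<gamma> t) = \<bar>s - t\<bar>" using assms(1) isgeo_def by blast
  then have "d (\<gamma> t) (\<gamma> (d x y)) = \<bar>t - d x y\<bar>" using assms(2,3) by auto
  then show "d (\<gamma> t) y = d x y - t" using assms(3) unfolding e by auto
  show "\<gamma> t \<in> M" using assms unfolding isgeo_def by auto
qed

lemma isgeo_seg: assumes "isgeo \<gamma> x y" "0 \<le> t" "t \<le> d x y"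
  shows "\<gamma> t \<in> seg x y"
  using isgeo_dist[OF assms] unfolding seg_def by auto

lemma isgeo_ends: "isgeo \<gamma> x y \<Longrightarrow> x \<in> M \<and> y \<in> M"
  unfolding isgeo_def by (metis Pi_iff atLeastAtMost_iff nonneg order_refl)

lemma concat:
  assumes g1: "isgeo \<gamma>1 a p" and g2: "isgeo \<gamma>2 p b" and s: "d a p + d p b = d a b"
  shows "isgeo (\<lambda>t. if t \<le> d a p then \<gamma>1 t else \<gamma>2 (t - d a p)) a b"
proof -
  let ?g = "\<lambda>t. if t \<le> d a p then \<gamma>1 t else \<gamma>2 (t - d a p)"
  have M: "a \<in> M" "p \<in> M" "b \<in> M" using isgeo_ends g1 g2 by auto
  have cross: "d (\<gamma>1 s) (\<gamma>2 (t - d a p)) = t - s"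
    if "0 \<le> s" "s \<le> d a p" "d a p < t" "t \<le> d a b" for s t
  proof -
    have t2: "0 \<le> t - d a p" "t - d a p \<le> d p b" using that s by auto
    have e1: "d a (\<gamma>1 s) = s" "d (\<gamma>1 s) p = d a p - s" "\<gamma>1 s \<in> M"
      using isgeo_dist[OF g1] that by auto
    have e2: "d p (\<gamma>2 (t - d a p)) = t - d a p" "d (\<gamma>2 (t - d a p)) b = d p b - (t - d a p)"
       "\<gamma>2 (t - d a p) \<in> M"
      using isgeo_dist[OF g2 t2] by auto
    have "d (\<gamma>1 s) (\<gamma>2 (t - d a p)) \<le> d (\<gamma>1 s) p + d p (\<gamma>2 (t - d a p))"
      using triangle e1 e2 M by blast
    moreover have "d a b \<le> d a (\<gamma>1 s) + d (\<gamma>1 s) (\<gamma>2 (t - d a p)) + d (\<gamma>2 (t - d a p)) b"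
      using triangle e1 e2 M by (smt (verit))
    ultimately show ?thesis using e1 e2 s by linarith
  qed
  show ?thesis unfolding isgeo_def
  proof (intro conjI ballI)
    show "?g \<in> {0..d a b} \<rightarrow> M"
    proof
      fix t assume "t \<in> {0..d a b}"
      then show "?g t \<in> M" using isgeo_dist(3)[OF g1, of t] isgeo_dist(3)[OF g2, of "t - d a p"] s by auto
    qed
    show "?g 0 = a" using g1 unfolding isgeo_def by auto
    show "?g (d a b) = b"
    proof (cases "d a b \<le> d a p")
      case True
      then have "d p b = 0" using s by (smt (verit) nonneg)
      then have "p = b" using M by simp
      then show ?thesis using True g1 s unfolding isgeo_def by auto
    next
      case False
      have "d a b - d a p = d p b" using s by simp
      then show ?thesis using False g2 unfolding isgeo_def by auto
    qed
    fix s t assume st: "s \<in> {0..d a b}" "t \<in> {0..d a b}"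
    show "d (?g s) (?g t) = \<bar>s - t\<bar>"
    proof (cases "s \<le> d a p"; cases "t \<le> d a p")
      assume "s \<le> d a p" "t \<le> d a p" then show ?thesis using g1 st unfolding isgeo_def by auto
    next
      assume "s \<le> d a p" "\<not> t \<le> d a p" then show ?thesis using cross[of s t] st by auto
    next
      assume "\<not> s \<le> d a p" "t \<le> d a p" then show ?thesis using cross[of t s] st commute by auto
    next
      assume a: "\<not> s \<le> d a p" "\<not> t \<le> d a p"
      then have "d (\<gamma>2 (s - d a p)) (\<gamma>2 (t - d a p)) = \<bar>(s - d a p) - (t - d a p)\<bar>"
        using g2 st s unfolding isgeo_def by auto
      then show ?thesis using a by auto
    qed
  qed
qed

lemma seg_M: "p \<in> seg a b \<Longrightarrow> p \<in> M" unfolding seg_def by auto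

lemma self_seg: "a \<in> M \<Longrightarrow> b \<in> M \<Longrightarrow> a \<in> seg a b \<and> b \<in> seg a b"
  unfolding seg_def by auto

lemma geo_through:
  assumes "a \<in> M" "b \<in> M" "p \<in> seg a b"
  shows "\<exists>\<gamma>. isgeo \<gamma> a b \<and> \<gamma> (d a p) = p"
proof -
  have pM: "p \<in> M" and s: "d a p + d p b = d a b" using assms unfolding seg_def by auto
  obtain \<gamma>1 where g1: "isgeo \<gamma>1 a p" using geo_exists assms pM by blast
  obtain \<gamma>2 where g2: "isgeo \<gamma>2 p b" using geo_exists assms pM by blast
  have "isgeo (\<lambda>t. if t \<le> d a p then \<gamma>1 t else \<gamma>2 (t - d a p)) a b" by (rule concat[OF g1 g2 s])
  moreover have "\<gamma>1 (d a p) = p" using g1 unfolding isgeo_def by auto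
  ultimately show ?thesis by (intro exI[of _ "\<lambda>t. if t \<le> d a p then \<gamma>1 t else \<gamma>2 (t - d a p)"]) auto
qed

lemma U:
  assumes "a \<in> M" "b \<in> M" "p \<in> seg a b" "q \<in> seg a b" "d a p = d a q"
  shows "p = q"
proof -
  obtain \<gamma> where g: "isgeo \<gamma> a b" "\<gamma> (d a p) = p" using geo_through assms by blast
  obtain \<gamma>' where g': "isgeo \<gamma>' a b" "\<gamma>' (d a q) = q" using geo_through assms by blast
  have u: "uniquely_geodesic M d" using rt by (simp add: R_tree_def)
  have "geodesic_segment M d a b (\<gamma> ` {0..d a b})" "geodesic_segment M d a b (\<gamma>' ` {0..d a b})"
    using g g' gs_iff by blast+
  then have eq: "\<gamma> ` {0..d a b} = \<gamma>' ` {0..d a b}" using u assms(1,2) unfolding uniquely_geodesic_def by blast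
  have qs: "d a q + d q b = d a b" using assms(4) unfolding seg_def by auto
  have "q \<in> \<gamma>' ` {0..d a b}" using g'(2) qs by (metis atLeastAtMost_iff image_eqI le_add_same_cancel1 nonneg)
  then have "q \<in> \<gamma> ` {0..d a b}" using eq by simp
  then obtain t where t: "t \<in> {0..d a b}" "q = \<gamma> t" by blast
  then have "d a q = t" using isgeo_dist(1)[OF g(1)] by auto
  then show ?thesis using t g(2) assms(5) by simp
qed

lemma gs_sub: "geodesic_segment M d a b S \<Longrightarrow> S \<subseteq> seg a b"
  using gs_iff isgeo_seg by fastforce

lemma seg_gs: assumes "a \<in> M" "b \<in> M" shows "geodesic_segment M d a b (seg a b)"
proof -
  obtain \<gamma> where g: "isgeo \<gamma> a b" using geo_exists assms by blast
  have "seg a b \<subseteq> \<gamma> ` {0..d a b}"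
  proof
    fix p assume p: "p \<in> seg a b"
    then have "d a p + d p b = d a b" unfolding seg_def by auto
    then have t: "0 \<le> d a p" "d a p \<le> d a b" using nonneg[of p b] nonneg[of a p] by linarith+
    have "\<gamma> (d a p) \<in> seg a b" "d a (\<gamma> (d a p)) = d a p" using isgeo_seg[OF g t] isgeo_dist[OF g t] by auto
    then have "p = \<gamma> (d a p)" using U[OF assms p] by auto
    then show "p \<in> \<gamma> ` {0..d a b}" using t by auto
  qed
  moreover have "\<gamma> ` {0..d a b} \<subseteq> seg a b" using isgeo_seg[OF g] by auto
  ultimately show ?thesis using g gs_iff by blast
qed

lemma T0:
  assumes "a \<in> M" "b \<in> M" "0 \<le> t" "t \<le> d a b"
  shows "\<exists>q. q \<in> seg a b \<and> d a q = t"
proof -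
  obtain \<gamma> where g: "isgeo \<gamma> a b" using geo_exists assms by blast
  show ?thesis using isgeo_seg[OF g assms(3,4)] isgeo_dist[OF g assms(3,4)] by blast
qed

lemma TR1:
  assumes "a \<in> M" "b \<in> M" "w \<in> seg a b" "q \<in> seg w b"
  shows "q \<in> seg a b \<and> d a q = d a w + d w q"
proof -
  have M: "w \<in> M" "q \<in> M" using assms seg_M by auto
  have s1: "d a w + d w b = d a b" "d w q + d q b = d w b" using assms unfolding seg_def by auto
  have "d a q \<le> d a w + d w q" "d a b \<le> d a q + d q b" using triangle M assms(1,2) by auto
  then show ?thesis using s1 M assms(1) unfolding seg_def by auto
qed

lemma TR2:
  assumes "a \<in> M" "b \<in> M" "w \<in> seg a b" "q \<in> seg a w"
  shows "q \<in> seg a b \<and> d q b = d q w + d w b"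
proof -
  have "w \<in> seg b a" "q \<in> seg w a" using assms seg_sym by auto
  from TR1[OF assms(2,1) this] have "q \<in> seg b a \<and> d b q = d b w + d w q" .
  then show ?thesis using seg_sym[of a b] commute[of b q] commute[of b w] commute[of w q] by auto
qed

lemma DEC:
  assumes "a \<in> M" "b \<in> M" "w \<in> seg a b" "q \<in> seg a b"
  shows "q \<in> seg a w \<or> q \<in> seg w b"
proof (cases "d a q \<le> d a w")
  case True
  have w: "w \<in> M" using assms seg_M by auto
  obtain q' where q': "q' \<in> seg a w" "d a q' = d a q" using T0[OF assms(1) w, of "d a q"] True by auto
  have "q' \<in> seg a b" using TR2[OF assms(1,2,3) q'(1)] by auto
  then have "q' = q" using U[OF assms(1,2)] q' assms(4) by auto
  then show ?thesis using q' by auto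
next
  case False
  have w: "w \<in> M" using assms seg_M by auto
  have e: "d a w + d w b = d a b" "d a q + d q b = d a b" using assms unfolding seg_def by auto
  then have le: "d b q \<le> d b w" using False commute[of b q] commute[of b w] by linarith
  obtain q' where q': "q' \<in> seg b w" "d b q' = d b q" using T0[OF assms(2) w, of "d b q"] le by auto
  have "w \<in> seg b a" using assms(3) seg_sym by auto
  then have "q' \<in> seg b a" using TR2[OF assms(2,1), of w q'] q' by auto
  moreover have "q \<in> seg b a" using assms(4) seg_sym by auto
  ultimately have "q' = q" using U[OF assms(2,1)] q' by auto
  then show ?thesis using q' seg_sym by auto
qed

lemma axA:
  assumes "x \<in> M" "y \<in> M" "z \<in> M" "seg x y \<inter> seg y z = {y}"
  shows "y \<in> seg x z"
proof -
  have "geodesic_segment M d x z (seg x y \<union> seg y z)"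
    using rt seg_gs assms unfolding R_tree_def by blast
  then have "seg x y \<union> seg y z \<subseteq> seg x z" by (rule gs_sub)
  then show ?thesis using assms by auto
qed

lemma tripod:
  assumes x: "x \<in> M" and y: "y \<in> M" and z: "z \<in> M"
  shows "\<exists>w. w \<in> seg y x \<and> w \<in> seg y z \<and> w \<in> seg x z"
proof -
  obtain \<gamma> where g: "isgeo \<gamma> y x" using geo_exists x y by blast
  define P where "P = {t\<in>{0..d y x}. \<gamma> t \<in> seg y z}"
  define s where "s = Sup P"
  have g0: "\<gamma> 0 = y" using g unfolding isgeo_def by auto
  have "0 \<in> P" unfolding P_def using g0 self_seg[OF y z] by auto
  then have Pne: "P \<noteq> {}" by auto
  have bdd: "bdd_above P" unfolding P_def bdd_above_def by auto
  have s0: "0 \<le> s" unfolding s_def using cSup_upper[OF \<open>0 \<in> P\<close> bdd] .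
  have sL: "s \<le> d y x" unfolding s_def by (rule cSup_least[OF Pne]) (auto simp: P_def)
  have up: "t \<le> s" if "t \<in> P" for t unfolding s_def using cSup_upper[OF that bdd] .
  define w where "w = \<gamma> s"
  have wM: "w \<in> M" using isgeo_dist(3)[OF g s0 sL] w_def by auto
  have dyw: "d y w = s" using isgeo_dist(1)[OF g s0 sL] w_def by auto
  have wyx: "w \<in> seg y x" using isgeo_seg[OF g s0 sL] w_def by auto
  have "d y w + d w z \<le> d y z"
  proof (rule field_le_epsilon)
    fix e :: real assume e: "0 < e"
    have "s - e/2 < Sup P" using e s_def by simp
    then obtain t where t: "t \<in> P" "s - e/2 < t" using less_cSup_iff[OF Pne bdd] by auto
    have t0: "0 \<le> t" "t \<le> d y x" and ts: "\<gamma> t \<in> seg y z" using t(1) P_def by auto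
    have "t \<le> s" using up t by auto
    have d1: "d (\<gamma> s) (\<gamma> t) = \<bar>s - t\<bar>" using g s0 sL t0 unfolding isgeo_def by auto
    have d2: "d y (\<gamma> t) = t" using isgeo_dist(1)[OF g t0] .
    have d3: "d y (\<gamma> t) + d (\<gamma> t) z = d y z" using ts unfolding seg_def by auto
    have "d w z \<le> d w (\<gamma> t) + d (\<gamma> t) z" using triangle wM z isgeo_dist(3)[OF g t0] by auto
    then show "d y w + d w z \<le> d y z + e" using d1 d2 d3 dyw \<open>t \<le> s\<close> t(2) w_def by auto
  qed
  then have wyz: "w \<in> seg y z" using triangle[OF y wM z] wM unfolding seg_def by auto
  have inter: "seg x w \<inter> seg w z = {w}"
  proof
    show "{w} \<subseteq> seg x w \<inter> seg w z" using self_seg x wM z by auto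
    show "seg x w \<inter> seg w z \<subseteq> {w}"
    proof
      fix q assume q: "q \<in> seg x w \<inter> seg w z"
      then have q1: "q \<in> seg w x" "q \<in> seg w z" using seg_sym by auto
      have A1: "q \<in> seg y x \<and> d y q = d y w + d w q" using TR1[OF y x wyx q1(1)] .
      have A2: "q \<in> seg y z" using TR1[OF y z wyz q1(2)] by auto
      have qM: "q \<in> M" using q1 seg_M by auto
      have "d y q + d q x = d y x" using A1 unfolding seg_def by auto
      then have r: "0 \<le> d y q" "d y q \<le> d y x" using nonneg[of q x] nonneg[of y q] by linarith+
      have "\<gamma> (d y q) \<in> seg y x" "d y (\<gamma> (d y q)) = d y q"
        using isgeo_seg[OF g r] isgeo_dist[OF g r] by auto
      then have "\<gamma> (d y q) = q" using U[OF y x] A1 by auto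
      then have "d y q \<in> P" using A2 r P_def by auto
      then have "d y q \<le> s" using up by auto
      then have "d w q = 0" using A1 dyw nonneg[of w q] by auto
      then show "q \<in> {w}" using wM qM by auto
    qed
  qed
  have "w \<in> seg x z" using axA[OF x wM z inter] .
  then show ?thesis using wyx wyz by auto
qed

lemma seg_le: "m \<in> seg a b \<Longrightarrow> d a m \<le> d a b"
proof -
  assume "m \<in> seg a b" then have "d a m + d m b = d a b" unfolding seg_def by auto
  then show ?thesis using nonneg[of m b] by linarith
qed

lemma seg_le2: "m \<in> seg a b \<Longrightarrow> d m b \<le> d a b"
proof -
  assume "m \<in> seg a b" then have "d a m + d m b = d a b" unfolding seg_def by auto
  then show ?thesis using nonneg[of a m] by linarith
qed

lemma ballconv:
  assumes c: "c \<in> M" and p: "p \<in> M" and q: "q \<in> M" and "d c p \<le> \<rho>" "d c q \<le> \<rho>" "m \<in> seg p q"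
  shows "d c m \<le> \<rho>"
proof -
  obtain w where w: "w \<in> seg c p" "w \<in> seg c q" "w \<in> seg p q" using tripod[OF p c q] by auto
  have "m \<in> seg p w \<or> m \<in> seg w q" using DEC[OF p q w(3) assms(6)] .
  then show ?thesis
  proof
    assume "m \<in> seg p w"
    then have "m \<in> seg w p" using seg_sym by auto
    then have "m \<in> seg c p" using TR1[OF c p w(1)] by auto
    then show ?thesis using seg_le assms(4) by force
  next
    assume "m \<in> seg w q"
    then have "m \<in> seg c q" using TR1[OF c q w(2)] by auto
    then show ?thesis using seg_le assms(5) by force
  qed
qed

definition tconv where "tconv C \<longleftrightarrow> C \<subseteq> M \<and> (\<forall>p\<in>C. \<forall>q\<in>C. seg p q \<subseteq> C)"

lemma gate:
  assumes z0: "z0 \<in> M" and C: "tconv C" and p: "p \<in> C" and min: "\<forall>c\<in>C. d z0 p \<le> d z0 c" and c: "c \<in> C"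
  shows "p \<in> seg z0 c"
proof -
  have pM: "p \<in> M" "c \<in> M" using C p c tconv_def by auto
  obtain w where w: "w \<in> seg p z0" "w \<in> seg p c" "w \<in> seg z0 c" using tripod[OF z0 pM(1) pM(2)] by auto
  have "w \<in> C" using C p c w(2) unfolding tconv_def by auto
  then have "d z0 p \<le> d z0 w" using min by auto
  moreover have "d p w + d w z0 = d p z0" using w(1) unfolding seg_def by auto
  ultimately have "d p w = 0" using commute[of z0 p] commute[of z0 w] nonneg[of p w] by linarith
  then have "w = p" using pM w seg_M by auto
  then show ?thesis using w(3) by auto
qed

lemma lip1:
  assumes z0: "z0 \<in> M" and C': "tconv C'" and p: "p \<in> M"
    and p': "p' \<in> C'" and min': "\<forall>c\<in>C'. d z0 p' \<le> d z0 c"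
    and q': "q' \<in> C'" and dq: "d p q' \<le> \<delta>"
  shows "d p p' \<le> max (d z0 p - d z0 p') \<delta>"
proof -
  have M: "p' \<in> M" "q' \<in> M" using C' p' q' tconv_def by auto
  have g: "p' \<in> seg z0 q'" using gate[OF z0 C' p' min' q'] .
  obtain w where w: "w \<in> seg z0 p" "w \<in> seg z0 q'" "w \<in> seg p q'" using tripod[OF p z0 M(2)] by auto
  have "p' \<in> seg z0 w \<or> p' \<in> seg w q'" using DEC[OF z0 M(2) w(2) g] .
  then show ?thesis
  proof
    assume "p' \<in> seg z0 w"
    then have "p' \<in> seg z0 p" using TR2[OF z0 p w(1)] by auto
    then have "d z0 p' + d p' p = d z0 p" unfolding seg_def by auto
    then show ?thesis using commute[of p p'] by auto
  next
    assume "p' \<in> seg w q'"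
    then have "p' \<in> seg p q'" using TR1[OF p M(2) w(3)] by auto
    then have "d p p' \<le> d p q'" using seg_le by auto
    then show ?thesis using dq by auto
  qed
qed

lemma lip:
  assumes z0: "z0 \<in> M" and C: "tconv C" and C': "tconv C'"
    and p: "p \<in> C" and min: "\<forall>c\<in>C. d z0 p \<le> d z0 c"
    and p': "p' \<in> C'" and min': "\<forall>c\<in>C'. d z0 p' \<le> d z0 c"
    and h1: "\<forall>c\<in>C. \<exists>c'\<in>C'. d c c' \<le> \<delta>"
    and h2: "\<forall>c'\<in>C'. \<exists>c\<in>C. d c' c \<le> \<delta>"
  shows "d p p' \<le> \<delta>"
proof -
  have M: "p \<in> M" "p' \<in> M" using C C' p p' tconv_def by auto
  obtain q' where q': "q' \<in> C'" "d p q' \<le> \<delta>" using h1 p by auto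
  obtain q where q: "q \<in> C" "d p' q \<le> \<delta>" using h2 p' by auto
  have a: "d p p' \<le> max (d z0 p - d z0 p') \<delta>" using lip1[OF z0 C' M(1) p' min' q'] .
  have b: "d p' p \<le> max (d z0 p' - d z0 p) \<delta>" using lip1[OF z0 C M(2) p min q] .
  have "0 \<le> \<delta>" using q'(2) nonneg[of p q'] by linarith
  then show ?thesis using a b commute[of p' p] by (auto simp: max_def split: if_splits)
qed

lemma K1:
  assumes y0: "y0 \<in> M" and cj: "cj \<in> M" and ck: "ck \<in> M" and r: "0 \<le> rj" "0 \<le> rk"
    and djk: "d cj ck \<le> rj + rk"
    and pj: "pj \<in> seg y0 cj" "d y0 pj = sj" and sj: "sj = max 0 (d y0 cj - rj)"
    and sk: "sk = max 0 (d y0 ck - rk)" and le: "sk \<le> sj"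
  shows "d pj ck \<le> rk"
proof (cases "sj = 0")
  case True
  then have "pj = y0" using pj y0 seg_M by auto
  moreover have "d y0 ck \<le> rk" using True le sk by auto
  ultimately show ?thesis by simp
next
  case False
  then have sj': "sj = d y0 cj - rj" using sj by auto
  have pjM: "pj \<in> M" using pj seg_M by auto
  have e1: "d y0 pj + d pj cj = d y0 cj" using pj unfolding seg_def by auto
  obtain w where w: "w \<in> seg y0 cj" "w \<in> seg y0 ck" "w \<in> seg cj ck" using tripod[OF cj y0 ck] by auto
  have "pj \<in> seg y0 w \<or> pj \<in> seg w cj" using DEC[OF y0 cj w(1) pj(1)] .
  then show ?thesis
  proof
    assume "pj \<in> seg y0 w"
    then have "pj \<in> seg y0 ck" using TR2[OF y0 ck w(2)] by auto
    then have "d y0 pj + d pj ck = d y0 ck" unfolding seg_def by auto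
    then show ?thesis using pj(2) le sk by auto
  next
    assume a: "pj \<in> seg w cj"
    have "w \<in> seg ck cj" using w(3) seg_sym by auto
    then have "pj \<in> seg ck cj" using TR1[OF ck cj _ a] by auto
    then have "d ck pj + d pj cj = d ck cj" unfolding seg_def by auto
    then show ?thesis using e1 pj(2) sj' djk commute[of ck pj] commute[of ck cj] by linarith
  qed
qed

lemma K2:
  assumes y0: "y0 \<in> M" and cj: "cj \<in> M" and ck: "ck \<in> M" and r: "0 \<le> rj" "0 \<le> rk"
    and djk: "d cj ck \<le> rj + rk"
    and pj: "pj \<in> seg y0 cj" "d y0 pj = sj" and sj: "sj = max 0 (d y0 cj - rj)"
    and pk: "pk \<in> seg y0 ck" "d y0 pk = sk"
    and sk: "sk = max 0 (d y0 ck - rk)" and le: "sk \<le> sj"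
  shows "pk \<in> seg y0 pj"
proof -
  have D: "d pj ck \<le> rk" using K1[OF y0 cj ck r djk pj sj sk le] .
  have pjM: "pj \<in> M" using pj seg_M by auto
  obtain w where w: "w \<in> seg y0 ck" "w \<in> seg y0 pj" "w \<in> seg ck pj" using tripod[OF ck y0 pjM] by auto
  have wM: "w \<in> M" using w seg_M by auto
  have "d ck w \<le> d ck pj" using seg_le[OF w(3)] .
  moreover have "d y0 w + d w ck = d y0 ck" using w(1) unfolding seg_def by auto
  ultimately have "sk \<le> d y0 w" using D sk commute[of ck w] commute[of ck pj] nonneg[of y0 w] by auto
  then obtain w' where w': "w' \<in> seg y0 w" "d y0 w' = sk" using T0[OF y0 wM, of sk] sk by auto
  have "w' \<in> seg y0 ck" using TR2[OF y0 ck w(1) w'(1)] by auto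
  then have "pk = w'" using U[OF y0 ck pk(1)] pk(2) w'(2) by auto
  then show ?thesis using TR2[OF y0 pjM w(2) w'(1)] by auto
qed

lemma hyper:
  assumes comp: "mcomplete" and Fne: "F \<noteq> {}" and FM: "\<forall>k\<in>F. fst k \<in> M"
    and pw: "\<forall>j\<in>F. \<forall>k\<in>F. d (fst j) (fst k) \<le> snd j + snd k"
  shows "\<exists>p\<in>M. \<forall>k\<in>F. d p (fst k) \<le> snd k"
proof -
  obtain k0 where k0: "k0 \<in> F" using Fne by auto
  define y0 where "y0 = fst k0"
  define r0 where "r0 = snd k0"
  have y0: "y0 \<in> M" using k0 FM y0_def by auto
  have rnn: "0 \<le> snd k" if "k \<in> F" for k using pw that FM by (smt (verit) zero)
  define sf where "sf k = max 0 (d y0 (fst k) - snd k)" for k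
  have sfr0: "sf k \<le> r0" if "k \<in> F" for k
  proof -
    have "d (fst k0) (fst k) \<le> snd k0 + snd k" using pw k0 that by auto
    then show ?thesis using rnn[OF k0] unfolding sf_def y0_def r0_def by auto
  qed
  have sfd: "0 \<le> sf k" "sf k \<le> d y0 (fst k)" if "k \<in> F" for k
    using rnn[OF that] unfolding sf_def by auto
  define pt where "pt k = (SOME q. q \<in> seg y0 (fst k) \<and> d y0 q = sf k)" for k
  have pt: "pt k \<in> seg y0 (fst k) \<and> d y0 (pt k) = sf k" if "k \<in> F" for k
  proof -
    have "\<exists>q. q \<in> seg y0 (fst k) \<and> d y0 q = sf k" using T0[OF y0, of "fst k" "sf k"] FM that sfd[OF that] by auto
    then show ?thesis unfolding pt_def by (rule someI_ex)
  qed
  have ptM: "pt k \<in> M" if "k \<in> F" for k using pt[OF that] seg_M by auto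
  have k1: "d (pt j) (fst k) \<le> snd k" if "j \<in> F" "k \<in> F" "sf k \<le> sf j" for j k
    using K1[OF y0, of "fst j" "fst k" "snd j" "snd k" "pt j" "sf j" "sf k"] that FM rnn pw pt sf_def by auto
  have k2: "d (pt j) (pt k) = sf j - sf k" if "j \<in> F" "k \<in> F" "sf k \<le> sf j" for j k
  proof -
    have "pt k \<in> seg y0 (pt j)"
      using K2[OF y0, of "fst j" "fst k" "snd j" "snd k" "pt j" "sf j" "pt k" "sf k"] that FM rnn pw pt sf_def by auto
    then have "d y0 (pt k) + d (pt k) (pt j) = d y0 (pt j)" unfolding seg_def by auto
    then show ?thesis using pt that commute[of "pt j" "pt k"] by auto
  qed
  have kd: "d (pt j) (pt k) = \<bar>sf j - sf k\<bar>" if "j \<in> F" "k \<in> F" for j k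
  proof (cases "sf k \<le> sf j")
    case True then show ?thesis using k2 that by auto
  next
    case False then show ?thesis using k2[of k j] that commute[of "pt j" "pt k"] by auto
  qed
  have kb: "d (pt j) (fst k) \<le> snd k + max 0 (sf k - sf j)" if "j \<in> F" "k \<in> F" for j k
  proof (cases "sf k \<le> sf j")
    case True then show ?thesis using k1 that by auto
  next
    case False
    have "d (pt j) (fst k) \<le> d (pt j) (pt k) + d (pt k) (fst k)" using triangle ptM FM that by auto
    moreover have "d (pt k) (fst k) \<le> snd k" using k1[of k k] that by auto
    ultimately show ?thesis using kd that False by auto
  qed
  define \<sigma> where "\<sigma> = Sup (sf ` F)"
  have bdd: "bdd_above (sf ` F)" unfolding bdd_above_def using sfr0 by blast
  have sfs: "sf k \<le> \<sigma>" if "k \<in> F" for k unfolding \<sigma>_def using cSup_upper[OF _ bdd] that by auto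
  have "\<exists>k\<in>F. \<sigma> - inverse (real (Suc n)) < sf k" for n
  proof -
    have "\<sigma> - inverse (real (Suc n)) < Sup (sf ` F)" unfolding \<sigma>_def by simp
    then show ?thesis using less_cSup_iff[OF _ bdd] Fne by auto
  qed
  then obtain kk where kk: "\<And>n. kk n \<in> F \<and> \<sigma> - inverse (real (Suc n)) < sf (kk n)" by metis
  define q where "q n = pt (kk n)" for n
  have inv_mono: "inverse (real (Suc n)) \<le> inverse (real (Suc N))" if "N \<le> n" for n N
    using that by (simp add: le_imp_inverse_le)
  have close: "\<sigma> - sf (kk n) < inverse (real (Suc N))" "sf (kk n) \<le> \<sigma>" if "N \<le> n" for n N
  proof -
    have "\<sigma> - inverse (real (Suc n)) < sf (kk n)" "kk n \<in> F" using kk[of n] by auto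
    then show "\<sigma> - sf (kk n) < inverse (real (Suc N))" "sf (kk n) \<le> \<sigma>"
      using inv_mono[OF that] sfs[of "kk n"] by linarith+
  qed
  have cauchy: "MCauchy q"
    unfolding MCauchy_def
  proof (intro conjI allI impI)
    show "range q \<subseteq> M" using ptM kk unfolding q_def by blast
    fix e :: real assume e: "0 < e"
    obtain N where N: "inverse (real (Suc N)) < e" using reals_Archimedean[OF e] by auto
    show "\<exists>N. \<forall>n n'. N \<le> n \<longrightarrow> N \<le> n' \<longrightarrow> d (q n) (q n') < e"
    proof (intro exI allI impI)
      fix n n' assume "N \<le> n" "N \<le> n'"
      then have "\<bar>sf (kk n) - sf (kk n')\<bar> < inverse (real (Suc N))" using close[of N n] close[of N n'] by auto
      then show "d (q n) (q n') < e" using kd kk q_def N by auto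
    qed
  qed
  then obtain p where lim: "limitin mtopology q p sequentially" using comp unfolding mcomplete_def by blast
  then have pM: "p \<in> M" and conv: "\<forall>e>0. \<exists>N. \<forall>n\<ge>N. q n \<in> M \<and> d (q n) p < e"
    using limit_metric_sequentially by auto
  have "d p (fst k) \<le> snd k" if k: "k \<in> F" for k
  proof (rule field_le_epsilon)
    fix e :: real assume e: "0 < e"
    obtain N1 where N1: "\<forall>n\<ge>N1. d (q n) p < e/2" using conv e by (meson half_gt_zero)
    obtain N2 where N2: "inverse (real (Suc N2)) < e/2" using reals_Archimedean[of "e/2"] e by auto
    define n where "n = max N1 N2"
    have a: "d (q n) p < e/2" using N1 n_def by auto
    have b: "\<sigma> - sf (kk n) < e/2" using close[of N2 n] N2 n_def by auto
    have c: "d (q n) (fst k) \<le> snd k + max 0 (sf k - sf (kk n))" using kb[OF _ k] kk q_def by auto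
    have "d p (fst k) \<le> d p (q n) + d (q n) (fst k)" using triangle pM ptM kk q_def FM k by auto
    moreover have "max 0 (sf k - sf (kk n)) \<le> \<sigma> - sf (kk n)" using sfs[OF k] close(2)[of N2 n] n_def by auto
    ultimately show "d p (fst k) \<le> snd k + e" using a b c commute[of p "q n"] by linarith
  qed
  then show ?thesis using pM by blast
qed

end

locale ext_setup = rtree M d for M d +
  fixes MX :: "'x set" and dX A z0
  assumes comp: "mcomplete" and X: "Metric_space MX dX" and AX: "A \<subseteq> MX" and Ane: "A \<noteq> {}"
    and z0: "z0 \<in> M"
begin

lemma dXt: "a \<in> MX \<Longrightarrow> b \<in> MX \<Longrightarrow> c \<in> MX \<Longrightarrow> dX a c \<le> dX a b + dX b c"
  using Metric_space.triangle[OF X] by blast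
lemma dXc: "dX a b = dX b a" using Metric_space.commute[OF X] by blast
lemma dX0: "a \<in> MX \<Longrightarrow> dX a a = 0" using Metric_space.zero[OF X] by blast
lemma dXn: "0 \<le> dX a b" using Metric_space.nonneg[OF X] by blast

definition CC where "CC f x = {y \<in> M. \<forall>a\<in>A. d y (f a) \<le> dX x a}"

lemma fM: "f \<in> bnonexp A dX M d \<Longrightarrow> a \<in> A \<Longrightarrow> f a \<in> M"
  unfolding bnonexp_def by auto
lemma fne: "f \<in> bnonexp A dX M d \<Longrightarrow> a \<in> A \<Longrightarrow> b \<in> A \<Longrightarrow> d (f a) (f b) \<le> dX a b"
  unfolding bnonexp_def by auto

lemma CC_conv: assumes f: "f \<in> bnonexp A dX M d" shows "tconv (CC f x)"
  unfolding tconv_def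
proof (intro conjI ballI subsetI)
  show "y \<in> M" if "y \<in> CC f x" for y using that CC_def by auto
  fix p q m assume p: "p \<in> CC f x" and q: "q \<in> CC f x" and m: "m \<in> seg p q"
  have "d (f a) m \<le> dX x a" if a: "a \<in> A" for a
    using ballconv[OF fM[OF f a], of p q "dX x a" m] p q m a commute unfolding CC_def by auto
  then show "m \<in> CC f x" using m seg_M commute unfolding CC_def by auto
qed

lemma CC_haus:
  assumes f: "f \<in> bnonexp A dX M d" and g: "g \<in> bnonexp A dX M d"
    and D: "\<forall>a\<in>A. d (f a) (g a) \<le> D" and x: "x \<in> MX" and x': "x' \<in> MX" and y: "y \<in> CC f x"
  shows "\<exists>z\<in>CC g x'. d y z \<le> dX x x' + D"
proof -
  define F where "F = insert (y, dX x x' + D) ((\<lambda>a. (g a, dX x' a)) ` A)"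
  obtain a0 where a0: "a0 \<in> A" using Ane by auto
  have D0: "0 \<le> D" using D a0 nonneg[of "f a0" "g a0"] by (meson order_trans)
  have yM: "y \<in> M" using y CC_def by auto
  have "\<exists>p\<in>M. \<forall>k\<in>F. d p (fst k) \<le> snd k"
  proof (rule hyper[OF comp])
    show "F \<noteq> {}" using F_def by auto
    show "\<forall>k\<in>F. fst k \<in> M" using F_def yM fM[OF g] by auto
    have yg: "d y (g a) \<le> dX x x' + D + dX x' a" if a: "a \<in> A" for a
    proof -
      have "d y (g a) \<le> d y (f a) + d (f a) (g a)" using triangle yM fM[OF f a] fM[OF g a] by auto
      moreover have "d y (f a) \<le> dX x a" using y a CC_def by auto
      moreover have "dX x a \<le> dX x x' + dX x' a" using dXt x x' a AX by auto
      ultimately show ?thesis using D a by fastforce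
    qed
    have gg: "d (g a) (g b) \<le> dX x' a + dX x' b" if "a \<in> A" "b \<in> A" for a b
      using fne[OF g that] dXt[of a x' b] dXc[of a x'] that AX x' by fastforce
    show "\<forall>j\<in>F. \<forall>k\<in>F. d (fst j) (fst k) \<le> snd j + snd k"
      unfolding F_def using yg gg D0 dXn[of x x'] yM by (auto simp: add.commute commute)
  qed
  then obtain p where p: "p \<in> M" "\<forall>k\<in>F. d p (fst k) \<le> snd k" by auto
  have "p \<in> CC g x'" using p F_def unfolding CC_def by auto
  moreover have "d y p \<le> dX x x' + D" using p F_def commute by auto
  ultimately show ?thesis by auto
qed

lemma CC_ne: assumes f: "f \<in> bnonexp A dX M d" and x: "x \<in> MX" and R: "\<forall>a\<in>A. d z0 (f a) \<le> R"
  shows "\<exists>c\<in>CC f x. d z0 c \<le> R"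
proof -
  define F where "F = insert (z0, R) ((\<lambda>a. (f a, dX x a)) ` A)"
  obtain a0 where a0: "a0 \<in> A" using Ane by auto
  have R0: "0 \<le> R" using R a0 nonneg[of z0 "f a0"] by (meson order_trans)
  have "\<exists>p\<in>M. \<forall>k\<in>F. d p (fst k) \<le> snd k"
  proof (rule hyper[OF comp])
    show "F \<noteq> {}" using F_def by auto
    show "\<forall>k\<in>F. fst k \<in> M" using F_def z0 fM[OF f] by auto
    have ff: "d (f a) (f b) \<le> dX x a + dX x b" if "a \<in> A" "b \<in> A" for a b
      using fne[OF f that] dXt[of a x b] dXc[of a x] that AX x by fastforce
    have zf: "d z0 (f a) \<le> R + dX x a" if "a \<in> A" for a using R that dXn[of x a] by fastforce
    show "\<forall>j\<in>F. \<forall>k\<in>F. d (fst j) (fst k) \<le> snd j + snd k"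
      unfolding F_def using ff zf R0 z0 by (auto simp: add.commute commute)
  qed
  then obtain p where p: "p \<in> M" "\<forall>k\<in>F. d p (fst k) \<le> snd k" by auto
  have "p \<in> CC f x" using p F_def unfolding CC_def by auto
  moreover have "d z0 p \<le> R" using p F_def commute by auto
  ultimately show ?thesis by auto
qed

lemma CC_near: assumes f: "f \<in> bnonexp A dX M d" and x: "x \<in> MX"
  shows "\<exists>p\<in>CC f x. \<forall>c\<in>CC f x. d z0 p \<le> d z0 c"
proof -
  have "\<exists>y. \<forall>a\<in>A. d z0 (f a) \<le> y"
  proof -
    have "mbounded (f ` A)" using f unfolding bnonexp_def by auto
    then obtain c B where "f ` A \<subseteq> mcball c B" unfolding mbounded_def by auto
    then have "\<forall>a\<in>A. d z0 (f a) \<le> d z0 c + B" using triangle z0 unfolding mcball_def by fastforce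
    then show ?thesis by blast
  qed
  then obtain R where "\<forall>a\<in>A. d z0 (f a) \<le> R" by blast
  then have Cne: "CC f x \<noteq> {}" using CC_ne[OF f x] by auto
  define r where "r = Inf ((\<lambda>c. d z0 c) ` CC f x)"
  have bddb: "bdd_below ((\<lambda>c. d z0 c) ` CC f x)" by (rule bdd_belowI[of _ 0]) auto
  have rle: "r \<le> d z0 c" if "c \<in> CC f x" for c unfolding r_def using cINF_lower[OF bddb that] .
  have r0: "0 \<le> r" unfolding r_def using Cne by (intro cINF_greatest) auto
  have fr: "d z0 (f a) \<le> r + dX x a" if a: "a \<in> A" for a
  proof -
    have "d z0 (f a) - dX x a \<le> r" unfolding r_def
    proof (rule cINF_greatest[OF Cne])
      fix c assume c: "c \<in> CC f x"
      then have "d z0 (f a) \<le> d z0 c + d c (f a)" using triangle z0 fM[OF f a] CC_def by auto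
      then show "d z0 (f a) - dX x a \<le> d z0 c" using c a CC_def by fastforce
    qed
    then show ?thesis by auto
  qed
  define F where "F = insert (z0, r) ((\<lambda>a. (f a, dX x a)) ` A)"
  have "\<exists>p\<in>M. \<forall>k\<in>F. d p (fst k) \<le> snd k"
  proof (rule hyper[OF comp])
    show "F \<noteq> {}" using F_def by auto
    show "\<forall>k\<in>F. fst k \<in> M" using F_def z0 fM[OF f] by auto
    have ff: "d (f a) (f b) \<le> dX x a + dX x b" if "a \<in> A" "b \<in> A" for a b
      using fne[OF f that] dXt[of a x b] dXc[of a x] that AX x by fastforce
    show "\<forall>j\<in>F. \<forall>k\<in>F. d (fst j) (fst k) \<le> snd j + snd k"
      unfolding F_def using ff fr r0 z0 by (auto simp: add.commute commute)
  qed
  then obtain p where p: "p \<in> M" "\<forall>k\<in>F. d p (fst k) \<le> snd k" by auto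
  have "p \<in> CC f x" using p F_def unfolding CC_def by auto
  moreover have "d z0 p \<le> r" using p F_def commute by auto
  ultimately show ?thesis using rle by force
qed


definition PP where "PP f x = (SOME p. p \<in> CC f x \<and> (\<forall>c\<in>CC f x. d z0 p \<le> d z0 c))"

lemma PP: assumes "f \<in> bnonexp A dX M d" "x \<in> MX"
  shows "PP f x \<in> CC f x \<and> (\<forall>c\<in>CC f x. d z0 (PP f x) \<le> d z0 c)"
  using CC_near[OF assms] unfolding PP_def by (rule someI2_bex) auto

lemma PPM: "f \<in> bnonexp A dX M d \<Longrightarrow> x \<in> MX \<Longrightarrow> PP f x \<in> M"
  using PP CC_def by auto

lemma PPlip:
  assumes f: "f \<in> bnonexp A dX M d" and g: "g \<in> bnonexp A dX M d"
    and D: "\<forall>a\<in>A. d (f a) (g a) \<le> D" and x: "x \<in> MX" and x': "x' \<in> MX"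
  shows "d (PP f x) (PP g x') \<le> dX x x' + D"
proof (rule lip[OF z0 CC_conv[OF f] CC_conv[OF g]])
  show "PP f x \<in> CC f x" "\<forall>c\<in>CC f x. d z0 (PP f x) \<le> d z0 c" using PP[OF f x] by auto
  show "PP g x' \<in> CC g x'" "\<forall>c\<in>CC g x'. d z0 (PP g x') \<le> d z0 c" using PP[OF g x'] by auto
  show "\<forall>c\<in>CC f x. \<exists>c'\<in>CC g x'. d c c' \<le> dX x x' + D" using CC_haus[OF f g D x x'] by auto
  have D': "\<forall>a\<in>A. d (g a) (f a) \<le> D" using D commute by auto
  show "\<forall>c'\<in>CC g x'. \<exists>c\<in>CC f x. d c' c \<le> dX x x' + D" using CC_haus[OF g f D' x' x] dXc[of x x'] by auto
qed

lemma PPA: assumes f: "f \<in> bnonexp A dX M d" and x: "x \<in> A" shows "PP f x = f x"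
proof -
  have "d (PP f x) (f x) \<le> dX x x" using PP[OF f] x AX CC_def by blast
  then have "d (PP f x) (f x) = 0" using dX0 x AX nonneg by (metis antisym subsetD)
  then show ?thesis using PPM[OF f] fM[OF f x] x AX by auto
qed

lemma fbound: assumes f: "f \<in> bnonexp A dX M d" shows "\<exists>R. \<forall>a\<in>A. d z0 (f a) \<le> R"
proof -
  have "mbounded (f ` A)" using f unfolding bnonexp_def by auto
  then obtain c B where "f ` A \<subseteq> mcball c B" unfolding mbounded_def by auto
  then have "\<forall>a\<in>A. d z0 (f a) \<le> d z0 c + B" using triangle z0 unfolding mcball_def by fastforce
  then show ?thesis by blast
qed

lemma fgbound: assumes f: "f \<in> bnonexp A dX M d" and g: "g \<in> bnonexp A dX M d"
  shows "bdd_above ((\<lambda>a. d (f a) (g a)) ` A)"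
proof -
  obtain R1 where R1: "\<forall>a\<in>A. d z0 (f a) \<le> R1" using fbound[OF f] by auto
  obtain R2 where R2: "\<forall>a\<in>A. d z0 (g a) \<le> R2" using fbound[OF g] by auto
  have "d (f a) (g a) \<le> R1 + R2" if a: "a \<in> A" for a
  proof -
    have "d (f a) (g a) \<le> d (f a) z0 + d z0 (g a)" using triangle z0 fM[OF f a] fM[OF g a] by auto
    then show ?thesis using R1 R2 a commute[of "f a" z0] by fastforce
  qed
  then show ?thesis by (intro bdd_aboveI[of _ "R1 + R2"]) auto
qed

lemma main:
  "\<exists>\<alpha>. (\<forall>f\<in>bnonexp A dX M d. \<alpha> f \<in> bnonexp MX dX M d \<and> restrict (\<alpha> f) A = f) \<and>
            (\<forall>f\<in>bnonexp A dX M d. \<forall>g\<in>bnonexp A dX M d.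
              dsup MX d (\<alpha> f) (\<alpha> g) \<le> dsup A d f g)"
proof (intro exI[of _ "\<lambda>f. restrict (PP f) MX"] conjI ballI)
  fix f assume f: "f \<in> bnonexp A dX M d"
  have D0: "\<forall>a\<in>A. d (f a) (f a) \<le> 0" using fM[OF f] by auto
  show "restrict (PP f) MX \<in> bnonexp MX dX M d"
    unfolding bnonexp_def
  proof (intro CollectI conjI ballI)
    show "restrict (PP f) MX \<in> MX \<rightarrow>\<^sub>E M" using PPM[OF f] by auto
    fix x y assume "x \<in> MX" "y \<in> MX"
    then show "d (restrict (PP f) MX x) (restrict (PP f) MX y) \<le> dX x y"
      using PPlip[OF f f D0] by auto
  next
    obtain R where R: "\<forall>a\<in>A. d z0 (f a) \<le> R" using fbound[OF f] by auto
    have "d z0 (PP f x) \<le> R" if x: "x \<in> MX" for x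
    proof -
      obtain c where "c \<in> CC f x" "d z0 c \<le> R" using CC_ne[OF f x R] by auto
      then show ?thesis using PP[OF f x] by force
    qed
    then have "\<forall>x\<in>MX. d z0 (PP f x) \<le> R" by blast
    then show "mbounded (restrict (PP f) MX ` MX)" unfolding mbounded using z0 PPM[OF f] by auto
  qed
  show "restrict (restrict (PP f) MX) A = f"
  proof
    fix x show "restrict (restrict (PP f) MX) A x = f x"
    proof (cases "x \<in> A")
      case True then show ?thesis using PPA[OF f True] AX by auto
    next
      case False then show ?thesis using f unfolding bnonexp_def by (auto simp: PiE_def extensional_def)
    qed
  qed
next
  fix f g assume f: "f \<in> bnonexp A dX M d" and g: "g \<in> bnonexp A dX M d"
  have D: "\<forall>a\<in>A. d (f a) (g a) \<le> dsup A d f g" unfolding dsup_def using cSUP_upper[OF _ fgbound[OF f g]] by auto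
  have MXne: "MX \<noteq> {}" using Ane AX by auto
  show "dsup MX d (restrict (PP f) MX) (restrict (PP g) MX) \<le> dsup A d f g"
    unfolding dsup_def[of MX]
  proof (rule cSUP_least[OF MXne])
    fix x assume x: "x \<in> MX"
    show "d (restrict (PP f) MX x) (restrict (PP g) MX x) \<le> dsup A d f g"
      using PPlip[OF f g D x x] dX0[OF x] x by auto
  qed
qed

end

theorem corollary5p9:
  fixes MX :: "'a set" and dX :: "'a \<Rightarrow> 'a \<Rightarrow> real"
    and MY :: "'b set" and dY :: "'b \<Rightarrow> 'b \<Rightarrow> real"
    and A :: "'a set"
  assumes "Metric_space MX dX"
    and "A \<subseteq> MX" and "A \<noteq> {}"
    and "R_tree MY dY" and "Metric_space.mcomplete MY dY"
  shows "\<exists>\<alpha>. (\<forall>f\<in>bnonexp A dX MY dY.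
              \<alpha> f \<in> bnonexp MX dX MY dY \<and> restrict (\<alpha> f) A = f) \<and>
            (\<forall>f\<in>bnonexp A dX MY dY. \<forall>g\<in>bnonexp A dX MY dY.
              dsup MX dY (\<alpha> f) (\<alpha> g) \<le> dsup A dY f g)"
proof (cases "MY = {}")
  case True
  have "bnonexp A dX MY dY = {}" using True assms(3) unfolding bnonexp_def by auto
  then show ?thesis by auto
next
  case False
  then obtain z0 where z0: "z0 \<in> MY" by auto
  have ms: "Metric_space MY dY" using assms(4) unfolding R_tree_def by auto
  interpret ext_setup MY dY MX dX A z0
    by (intro ext_setup.intro rtree.intro ext_setup_axioms.intro rtree_axioms.intro ms assms z0)
  show ?thesis using main .
qed

end
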